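(* Let $d\ge 1$ and $m>n\ge 1$ be integers, and let $f(d,n,m)$ be the minimum number of sets in an antipodal $(n,m)$-fold cover of $S^d$ with open sets. Then $f(d,n,m)\ge d+2n$.
   Context: $S^d$ denotes the $d$-dimensional unit sphere in $\mathbb{R}^{d+1}$ centered at the origin. A cover of $S^d$ is a (finite) family of subsets of $S^d$; it is an $n$-fold cover if every point of $S^d$ belongs to at least $n$ of the sets. A cover is antipodal if none of its sets contains a pair of antipodal points $x,-x$. The open northern hemisphere is $\{x\in S^d: x_{d+1}>0\}$. For $m>n\ge 1$, an $(n,m)$-fold cover of $S^d$ is an $n$-fold cover of $S^d$ in which every point of the open northern hemisphere belongs to at least $m$ of the sets. *)

theory Defs
  imports "HOL-Analysis.Analysis"
begin

text \<open>A finite family of subsets of the unit sphere S^d in a (d+1)-dimensional Euclidean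
space 'a, indexed by a finite index set I (repetitions allowed, the number of sets is card I).
The vector e is the coordinate direction playing the role of x_{d+1}.\<close>

definition open_sphere_family :: "'i set \<Rightarrow> ('i \<Rightarrow> 'a::euclidean_space set) \<Rightarrow> bool" where
  "open_sphere_family I U \<longleftrightarrow> finite I \<and>
     (\<forall>i\<in>I. openin (top_of_set (sphere (0::'a) 1)) (U i))"

definition antipodal_family :: "'i set \<Rightarrow> ('i \<Rightarrow> 'a::euclidean_space set) \<Rightarrow> bool" where
  "antipodal_family I U \<longleftrightarrow> (\<forall>i\<in>I. \<forall>x\<in>U i. - x \<notin> U i)"

definition nm_fold_cover :: "nat \<Rightarrow> nat \<Rightarrow> 'a::euclidean_space \<Rightarrow> 'i set \<Rightarrow> ('i \<Rightarrow> 'a set) \<Rightarrow> bool" where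
  "nm_fold_cover n m e I U \<longleftrightarrow>
     (\<forall>x\<in>sphere 0 1. n \<le> card {i\<in>I. x \<in> U i}) \<and>
     (\<forall>x\<in>sphere 0 1. x \<bullet> e > 0 \<longrightarrow> m \<le> card {i\<in>I. x \<in> U i})"

end

theory Submission
  imports Defs "HOL-Analysis.Analysis" "HOL-Homology.Invariance_of_Domain"
begin


locale benum =
  fixes b :: "nat \<Rightarrow> 'a::euclidean_space"
  assumes bij: "bij_betw b {..<DIM('a)} Basis"
begin

definition phi :: "'a \<Rightarrow> nat \<Rightarrow> real" where
  "phi x = (\<lambda>i. if i < DIM('a) then x \<bullet> b i else 0)"

definition psi :: "(nat \<Rightarrow> real) \<Rightarrow> 'a" where
  "psi y = (\<Sum>i<DIM('a). y i *\<^sub>R b i)"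

definition V :: "nat \<Rightarrow> 'a set" where
  "V k = {x. \<forall>i. k < i \<longrightarrow> i < DIM('a) \<longrightarrow> x \<bullet> b i = 0}"

definition SS :: "nat \<Rightarrow> 'a set" where
  "SS k = sphere 0 1 \<inter> V k"

definition NS :: "nat \<Rightarrow> (nat \<Rightarrow> real) set" where
  "NS k = {x. (\<Sum>i\<le>k. x i ^ 2) = 1 \<and> (\<forall>i>k. x i = 0)}"

lemma b_Basis: "i < DIM('a) \<Longrightarrow> b i \<in> Basis"
  using bij by (auto simp: bij_betw_def)

lemma b_inner: "i < DIM('a) \<Longrightarrow> j < DIM('a) \<Longrightarrow> b i \<bullet> b j = (if i = j then 1 else 0)"
proof -
  assume i: "i < DIM('a)" and j: "j < DIM('a)"
  have inj: "inj_on b {..<DIM('a)}" using bij by (auto simp: bij_betw_def)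
  show ?thesis
  proof (cases "i = j")
    case True then show ?thesis using b_Basis[OF i] by simp
  next
    case False
    then have "b i \<noteq> b j" using inj i j by (auto simp: inj_on_def)
    then show ?thesis using b_Basis[OF i] b_Basis[OF j] False by (simp add: inner_not_same_Basis)
  qed
qed

lemma sum_Basis_reindex: "(\<Sum>u\<in>Basis. F u) = (\<Sum>i<DIM('a). F (b i))"
  using sum.reindex_bij_betw[OF bij, of F] by simp

lemma repr: "(\<Sum>i<DIM('a). (x \<bullet> b i) *\<^sub>R b i) = x"
  using euclidean_representation[of x] sum_Basis_reindex[of "\<lambda>u. (x \<bullet> u) *\<^sub>R u"] by simp

lemma inner_repr: "x \<bullet> y = (\<Sum>i<DIM('a). (x \<bullet> b i) * (y \<bullet> b i))"
  using euclidean_inner[of x y] sum_Basis_reindex[of "\<lambda>u. (x \<bullet> u) * (y \<bullet> u)"] by simp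

lemma norm_sq: "norm x ^ 2 = (\<Sum>i<DIM('a). (x \<bullet> b i) ^ 2)"
  unfolding power2_norm_eq_inner inner_repr[of x x] by (simp add: power2_eq_square)

lemma psi_phi [simp]: "psi (phi x) = x"
  unfolding psi_def phi_def using repr[of x] by simp

lemma psi_inner: "j < DIM('a) \<Longrightarrow> psi y \<bullet> b j = y j"
proof -
  assume j: "j < DIM('a)"
  have "psi y \<bullet> b j = (\<Sum>i<DIM('a). y i * (b i \<bullet> b j))"
    by (simp add: psi_def inner_sum_left)
  also have "\<dots> = (\<Sum>i<DIM('a). if i = j then y j else 0)"
    by (rule sum.cong) (auto simp: b_inner j)
  also have "\<dots> = y j" using j by simp
  finally show ?thesis .
qed

lemma phi_psi: "(\<forall>i\<ge>DIM('a). y i = 0) \<Longrightarrow> phi (psi y) = y"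
  by (auto simp: phi_def psi_inner fun_eq_iff)

lemma phi_minus: "phi (- x) = (\<lambda>i. - phi x i)"
  by (auto simp: phi_def fun_eq_iff)

lemma psi_minus: "psi (\<lambda>i. - y i) = - psi y"
  by (simp add: psi_def sum_negf)

lemma subspace_V: "subspace (V k)"
  unfolding subspace_def V_def by (auto simp: inner_add_left)

lemma V_mono: "k \<le> k' \<Longrightarrow> V k \<subseteq> V k'"
  unfolding V_def by auto

lemma V_top: "DIM('a) \<le> Suc k \<Longrightarrow> V k = UNIV"
  unfolding V_def by auto

lemma b_in_V: "i < DIM('a) \<Longrightarrow> b i \<in> V k \<longleftrightarrow> i \<le> k"
  unfolding V_def by (auto simp: b_inner)

lemma dim_V_less: "Suc k < DIM('a) \<Longrightarrow> dim (V k) < dim (V (Suc k))"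
proof -
  assume k: "Suc k < DIM('a)"
  have sub: "V k \<subseteq> V (Suc k)" by (rule V_mono) simp
  have ne: "V k \<noteq> V (Suc k)" using b_in_V[OF k, of k] b_in_V[OF k, of "Suc k"] by auto
  have "dim (V k) \<le> dim (V (Suc k))" using sub by (rule dim_subset)
  moreover have "\<not> dim (V (Suc k)) \<le> dim (V k)"
    using subspace_dim_equal[OF subspace_V subspace_V sub] ne by blast
  ultimately show ?thesis by simp
qed

lemma phi_SS: "k < DIM('a) \<Longrightarrow> x \<in> SS k \<Longrightarrow> phi x \<in> NS k"
proof -
  assume k: "k < DIM('a)" and x: "x \<in> SS k"
  have "(\<Sum>i<DIM('a). (x \<bullet> b i) ^ 2) = 1" using x by (simp add: SS_def norm_sq[symmetric])
  moreover have "(\<Sum>i<DIM('a). (x \<bullet> b i) ^ 2) = (\<Sum>i\<le>k. (x \<bullet> b i) ^ 2)"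
  proof (rule sum.mono_neutral_right)
    show "{..k} \<subseteq> {..<DIM('a)}" using k by auto
    show "\<forall>i\<in>{..<DIM('a)} - {..k}. (x \<bullet> b i)\<^sup>2 = 0" using x by (auto simp: SS_def V_def)
  qed auto
  ultimately show ?thesis using k x by (auto simp: NS_def phi_def SS_def V_def)
qed

lemma psi_NS: "k < DIM('a) \<Longrightarrow> y \<in> NS k \<Longrightarrow> psi y \<in> SS k"
proof -
  assume k: "k < DIM('a)" and y: "y \<in> NS k"
  have "norm (psi y) ^ 2 = (\<Sum>i<DIM('a). (y i) ^ 2)" by (simp add: norm_sq psi_inner)
  also have "\<dots> = (\<Sum>i\<le>k. (y i) ^ 2)"
  proof (rule sum.mono_neutral_right)
    show "{..k} \<subseteq> {..<DIM('a)}" using k by auto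
    show "\<forall>i\<in>{..<DIM('a)} - {..k}. (y i)\<^sup>2 = 0" using y by (auto simp: NS_def)
  qed auto
  also have "\<dots> = 1" using y by (simp add: NS_def)
  finally have "norm (psi y) = 1" by (smt (verit) norm_ge_zero power2_eq_1_iff)
  then show ?thesis using y by (auto simp: SS_def V_def psi_inner NS_def)
qed

lemma NS_zero: "k < DIM('a) \<Longrightarrow> y \<in> NS k \<Longrightarrow> i \<ge> DIM('a) \<Longrightarrow> y i = 0"
  by (auto simp: NS_def)

lemma phi_psi_NS: "k < DIM('a) \<Longrightarrow> y \<in> NS k \<Longrightarrow> phi (psi y) = y"
  by (rule phi_psi) (auto simp: NS_def)

lemma nsphere_eq: "nsphere k = top_of_set (NS k)"
  by (simp add: nsphere NS_def euclidean_product_topology)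

lemma topspace_nsphere_eq: "topspace (nsphere k) = NS k"
  by (simp add: nsphere_eq)

lemma continuous_psi: "continuous_on A psi"
  unfolding psi_def
  by (intro continuous_intros continuous_on_subset[OF continuous_on_product_coordinates]) auto

lemma continuous_phi: "continuous_on A phi"
proof (rule continuous_on_coordinatewise_then_product)
  fix i show "continuous_on A (\<lambda>x. phi x i)"
    by (cases "i < DIM('a)") (auto simp: phi_def intro!: continuous_intros)
qed

lemma transfer_cont:
  assumes k: "k < DIM('a)" and f: "continuous_on (SS k) f" "f \<in> SS k \<rightarrow> SS k"
  shows "continuous_map (nsphere k) (nsphere k) (phi \<circ> f \<circ> psi)"
  unfolding nsphere_eq continuous_map_subtopology_eu
proof
  have "continuous_on (NS k) (f \<circ> psi)"
    by (rule continuous_on_compose[OF continuous_psi continuous_on_subset[OF f(1)]]) (use psi_NS[OF k] in auto)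
  then show "continuous_on (NS k) (phi \<circ> f \<circ> psi)"
    unfolding o_assoc[symmetric] by (rule continuous_on_compose[OF _ continuous_phi])
  show "phi \<circ> f \<circ> psi \<in> NS k \<rightarrow> NS k"
    using f(2) psi_NS[OF k] phi_SS[OF k] by (auto simp: Pi_iff)
qed

lemma transfer_homotopic:
  assumes k: "k < DIM('a)" and h: "homotopic_with_canon (\<lambda>x. True) (SS k) (SS k) f g"
  shows "Brouwer_degree2 k (phi \<circ> f \<circ> psi) = Brouwer_degree2 k (phi \<circ> g \<circ> psi)"
proof -
  have "homotopic_with_canon (\<lambda>x. True) (NS k) (SS k) (f \<circ> psi) (g \<circ> psi)"
    by (rule homotopic_with_compose_continuous_right[OF _ continuous_psi]) (use h psi_NS[OF k] in auto)
  then have "homotopic_with_canon (\<lambda>x. True) (NS k) (NS k) (phi \<circ> (f \<circ> psi)) (phi \<circ> (g \<circ> psi))"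
    by (rule homotopic_with_compose_continuous_left[OF _ continuous_phi]) (use phi_SS[OF k] in auto)
  then show ?thesis
    by (intro Brouwer_degree2_homotopic) (simp add: nsphere_eq o_assoc)
qed

lemma SS0: "x \<in> SS 0 \<Longrightarrow> x = b 0 \<or> x = - b 0"
proof -
  assume x: "x \<in> SS 0"
  have D: "0 < DIM('a)" by simp
  have "x = (\<Sum>i<DIM('a). (x \<bullet> b i) *\<^sub>R b i)" by (simp add: repr)
  also have "\<dots> = (\<Sum>i\<in>{0}. (x \<bullet> b i) *\<^sub>R b i)"
    by (rule sum.mono_neutral_right) (use x in \<open>auto simp: SS_def V_def\<close>)
  finally have xe: "x = (x \<bullet> b 0) *\<^sub>R b 0" by simp
  have "norm x = 1" using x by (simp add: SS_def)
  then have "\<bar>x \<bullet> b 0\<bar> = 1" using xe b_Basis[OF D]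
    by (metis norm_Basis norm_scaleR real_norm_def mult.right_neutral)
  then show ?thesis using xe by (auto simp: abs_if split: if_splits)
qed

lemma bSS: "i < DIM('a) \<Longrightarrow> i \<le> k \<Longrightarrow> b i \<in> SS k"
  using b_in_V b_Basis by (auto simp: SS_def)

lemma minus_SS: "x \<in> SS k \<Longrightarrow> - x \<in> SS k"
  by (auto simp: SS_def V_def)

lemma base_case:
  assumes f: "continuous_on (SS 0) f" "f \<in> SS 0 \<rightarrow> SS 0" and odd: "\<And>x. x \<in> SS 0 \<Longrightarrow> f (- x) = - f x"
  shows "odd (Brouwer_degree2 0 (phi \<circ> f \<circ> psi))"
proof -
  have D: "0 < DIM('a)" by simp
  have b0: "b 0 \<in> SS 0" using bSS[OF D] by simp
  have "f (b 0) = b 0 \<or> f (b 0) = - b 0" using SS0 f(2) b0 by auto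
  then show ?thesis
  proof
    assume fb: "f (b 0) = b 0"
    have "Brouwer_degree2 0 (phi \<circ> f \<circ> psi) = Brouwer_degree2 0 id"
    proof (rule Brouwer_degree2_eq)
      fix y assume "y \<in> topspace (nsphere 0)"
      then have y: "y \<in> NS 0" by (simp add: topspace_nsphere_eq)
      have "f (psi y) = psi y" using SS0[OF psi_NS[OF D y]] fb odd[OF b0] by auto
      then show "(phi \<circ> f \<circ> psi) y = id y" using phi_psi_NS[OF D y] by simp
    qed
    then show ?thesis by simp
  next
    assume fb: "f (b 0) = - b 0"
    have "Brouwer_degree2 0 (phi \<circ> f \<circ> psi) = Brouwer_degree2 0 (\<lambda>x i. if i = 0 then -x i else x i)"
    proof (rule Brouwer_degree2_eq)
      fix y assume "y \<in> topspace (nsphere 0)"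
      then have y: "y \<in> NS 0" by (simp add: topspace_nsphere_eq)
      have "f (psi y) = - psi y" using SS0[OF psi_NS[OF D y]] fb odd[OF b0] by auto
      then have "(phi \<circ> f \<circ> psi) y = (\<lambda>i. - y i)" using phi_psi_NS[OF D y] by (simp add: phi_minus)
      also have "\<dots> = (\<lambda>i. if i = 0 then -y i else y i)" using y by (auto simp: NS_def fun_eq_iff)
      finally show "(phi \<circ> f \<circ> psi) y = (\<lambda>i. if i = 0 then -y i else y i)" .
    qed
    then show ?thesis by (simp add: Brouwer_degree2_reflection)
  qed
qed

end


context benum begin

lemma compact_SS: "compact (SS K)"
  unfolding SS_def by (rule compact_Int_closed[OF compact_sphere closed_subspace[OF subspace_V]])

lemma approx_odd:
  assumes f: "continuous_on (SS K) f" "f \<in> SS K \<rightarrow> SS K"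
    and odd: "\<And>x. x \<in> SS K \<Longrightarrow> f (- x) = - f x"
  obtains h where "h differentiable_on SS K" "h \<in> SS K \<rightarrow> SS K"
    "\<And>x. x \<in> SS K \<Longrightarrow> h (- x) = - h x"
    "homotopic_with_canon (\<lambda>x. True) (SS K) (SS K) f h"
proof -
  have fV: "f ` SS K \<subseteq> V K" using f(2) by (auto simp: SS_def)
  obtain g where pg: "polynomial_function g" and gV: "g ` SS K \<subseteq> V K"
    and g12: "\<And>x. x \<in> SS K \<Longrightarrow> norm (f x - g x) < 1/2"
    using Stone_Weierstrass_polynomial_function_subspace[OF compact_SS f(1) _ subspace_V fV, of "1/2"]
    by auto
  define g' where "g' x = (1/2) *\<^sub>R (g x - g (- x))" for x
  have g'odd: "g' (- x) = - g' x" for x by (simp add: g'_def algebra_simps)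
  have g'V: "g' x \<in> V K" if "x \<in> SS K" for x
  proof -
    have "g x \<in> V K" "g (- x) \<in> V K" using gV that minus_SS by auto
    then show ?thesis unfolding g'_def by (intro subspace_scale[OF subspace_V] subspace_diff[OF subspace_V])
  qed
  have fg': "norm (f x - g' x) < 1/2" if x: "x \<in> SS K" for x
  proof -
    have mx: "- x \<in> SS K" using minus_SS x .
    have "f x - g' x = (1/2) *\<^sub>R ((f x - g x) - (f (- x) - g (- x)))"
      using odd[OF x] unfolding g'_def by (simp add: algebra_simps, simp add: scaleR_add_left[symmetric])
    also have "norm \<dots> \<le> (1/2) * (norm (f x - g x) + norm (f (- x) - g (- x)))"
      by (simp add: norm_triangle_ineq4)
    also have "\<dots> < 1/2" using g12[OF x] g12[OF mx] by simp
    finally show ?thesis .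
  qed
  have nf: "norm (f x) = 1" if "x \<in> SS K" for x using f(2) that by (auto simp: SS_def)
  have gnz: "g' x \<noteq> 0" if "x \<in> SS K" for x using fg'[OF that] nf[OF that] by auto
  have diffg: "g differentiable_on UNIV" by (rule differentiable_on_polynomial_function[OF pg])
  have diffg': "g' differentiable_on SS K"
  proof -
    have "(\<lambda>x. g (- x)) differentiable_on SS K"
      by (rule differentiable_on_compose[of uminus "SS K" g]) (auto intro: differentiable_on_subset[OF diffg] derivative_intros)
    then show ?thesis unfolding g'_def
      by (intro derivative_intros differentiable_on_subset[OF diffg]) auto
  qed
  define h where "h x = inverse (norm (g' x)) *\<^sub>R g' x" for x
  show thesis
  proof
    show "h differentiable_on SS K"
      unfolding h_def using gnz
      by (fastforce intro: derivative_intros diffg' differentiable_on_compose [OF diffg'])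
    show "h \<in> SS K \<rightarrow> SS K"
      using gnz g'V by (auto simp: h_def SS_def subspace_scale[OF subspace_V])
    show "h (- x) = - h x" if "x \<in> SS K" for x by (simp add: h_def g'odd)
    have contg': "continuous_on (SS K) g'" using diffg' differentiable_imp_continuous_on by blast
    have homfg: "homotopic_with_canon (\<lambda>z. True) (SS K) (V K - {0}) f g'"
    proof (rule homotopic_with_linear [OF f(1) contg'])
      fix x assume x: "x \<in> SS K"
      have non0: "0 \<notin> closed_segment (f x) (g' x)"
        using fg'[OF x] nf[OF x] by (auto simp: norm_minus_commute dest: segment_bound)
      have "closed_segment (f x) (g' x) \<subseteq> V K"
        using closed_segment_subset[of "f x" "V K" "g' x"] subspace_imp_convex[OF subspace_V] g'V[OF x] fV x
        by auto
      then show "closed_segment (f x) (g' x) \<subseteq> V K - {0}" using non0 by auto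
    qed
    have conT0: "continuous_on (V K - {0}) (\<lambda>y. inverse(norm y) *\<^sub>R y)"
      by (intro continuous_intros) auto
    have sub0T: "(\<lambda>y. inverse(norm y) *\<^sub>R y) \<in> (V K - {0}) \<rightarrow> SS K"
      by (auto simp: SS_def subspace_scale[OF subspace_V])
    show "homotopic_with_canon (\<lambda>x. True) (SS K) (SS K) f h"
      using homotopic_with_compose_continuous_left [OF homfg conT0 sub0T]
      by (rule homotopic_with_eq) (auto simp: h_def nf)
  qed
qed

end


context benum begin

lemma SS_sub: "SS k \<subseteq> SS (Suc k)"
  using V_mono[of k "Suc k"] by (auto simp: SS_def)

lemma SS_Suc_eq:
  assumes "Suc k < DIM('a)" "x \<in> SS (Suc k)" "x \<bullet> b (Suc k) = 0"
  shows "x \<in> SS k"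
proof -
  have "\<forall>i. k < i \<longrightarrow> i < DIM('a) \<longrightarrow> x \<bullet> b i = 0"
  proof (intro allI impI)
    fix i assume i: "k < i" "i < DIM('a)"
    show "x \<bullet> b i = 0"
    proof (cases "i = Suc k")
      case True then show ?thesis using assms by simp
    next
      case False then have "Suc k < i" using i by simp
      then show ?thesis using assms i by (auto simp: SS_def V_def)
    qed
  qed
  then show ?thesis using assms by (simp add: SS_def V_def)
qed

lemma push_equator:
  assumes k: "Suc k < DIM('a)"
    and h: "continuous_on (SS (Suc k)) h" "h \<in> SS (Suc k) \<rightarrow> SS (Suc k)"
    and odd: "\<And>x. x \<in> SS (Suc k) \<Longrightarrow> h (- x) = - h x"
    and p: "p \<in> SS (Suc k)" and avoid: "\<And>x. x \<in> SS k \<Longrightarrow> h x \<noteq> p \<and> h x \<noteq> - p"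
  obtains h2 where "continuous_on (SS (Suc k)) h2" "h2 \<in> SS (Suc k) \<rightarrow> SS (Suc k)"
    "\<And>x. x \<in> SS (Suc k) \<Longrightarrow> h2 (- x) = - h2 x"
    "homotopic_with_canon (\<lambda>x. True) (SS (Suc k)) (SS (Suc k)) h h2"
    "\<And>x. x \<in> SS k \<Longrightarrow> h2 x \<bullet> p = 0"
proof -
  let ?S = "SS (Suc k)" and ?V = "V (Suc k)"
  define lam where "lam x = 1 - \<bar>x \<bullet> b (Suc k)\<bar>" for x
  define w where "w t x = h x - (t * lam x * (h x \<bullet> p)) *\<^sub>R p" for t x
  have pn: "p \<bullet> p = 1" using p by (simp add: SS_def dot_square_norm)
  have pV: "p \<in> ?V" using p by (simp add: SS_def)
  have nh: "norm (h x) = 1" if "x \<in> ?S" for x using h(2) that by (auto simp: SS_def)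
  have hV: "h x \<in> ?V" if "x \<in> ?S" for x using h(2) that by (auto simp: SS_def)
  have lam01: "0 \<le> lam x \<and> lam x \<le> 1" if "x \<in> ?S" for x
  proof -
    have "\<bar>x \<bullet> b (Suc k)\<bar> \<le> norm x * norm (b (Suc k))" by (rule Cauchy_Schwarz_ineq2)
    then show ?thesis using that b_Basis[OF k] by (auto simp: lam_def SS_def)
  qed
  have wV: "w t x \<in> ?V" if "x \<in> ?S" for t x
    unfolding w_def using hV[OF that] pV subspace_V by (auto intro: subspace_diff subspace_scale)
  have wnz: "w t x \<noteq> 0" if x: "x \<in> ?S" and t: "0 \<le> t" "t \<le> 1" for t x
  proof
    assume w0: "w t x = 0"
    define c where "c = t * lam x"
    define a where "a = h x \<bullet> p"
    have hx: "h x = (c * a) *\<^sub>R p" using w0 by (simp add: w_def c_def a_def)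
    then have "h x \<bullet> p = (c * a) * (p \<bullet> p)" by simp
    then have "a = c * a" using pn by (simp add: a_def)
    moreover have "c * a \<noteq> 0" using hx nh[OF x] by auto
    ultimately have c1: "c = 1" by auto
    then have "t * lam x = 1" by (simp add: c_def)
    with lam01[OF x] t have "lam x = 1"
      by (metis mult_le_one mult.commute mult_cancel_left1 order_antisym_conv mult_left_le)
    then have "x \<bullet> b (Suc k) = 0" by (simp add: lam_def)
    then have xk: "x \<in> SS k" by (rule SS_Suc_eq[OF k x])
    have "norm (h x) = \<bar>a\<bar>" using hx c1 p by (simp add: SS_def)
    then have "\<bar>a\<bar> = 1" using nh[OF x] by simp
    then have "h x = p \<or> h x = - p" using hx c1 by (auto simp: abs_if split: if_splits)
    then show False using avoid[OF xk] by blast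
  qed
  define h2 where "h2 x = inverse (norm (w 1 x)) *\<^sub>R w 1 x" for x
  have contw: "continuous_on ?S (w t)" for t
    unfolding w_def lam_def by (intro continuous_intros h(1))
  show thesis
  proof
    show "continuous_on ?S h2"
      unfolding h2_def using wnz by (intro continuous_intros contw) auto
    show "h2 \<in> ?S \<rightarrow> ?S"
      using wnz wV by (auto simp: h2_def SS_def subspace_scale[OF subspace_V])
    show "h2 (- x) = - h2 x" if "x \<in> ?S" for x
    proof -
      have "w 1 (- x) = - w 1 x" using odd[OF that] by (simp add: w_def lam_def algebra_simps)
      then show ?thesis by (simp add: h2_def)
    qed
    show "h2 x \<bullet> p = 0" if x: "x \<in> SS k" for x
    proof -
      have "x \<bullet> b (Suc k) = 0" using x k by (auto simp: SS_def V_def)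
      then have "w 1 x \<bullet> p = 0" using pn by (simp add: w_def lam_def inner_diff_left)
      then show ?thesis by (simp add: h2_def)
    qed
    have homw: "homotopic_with_canon (\<lambda>z. True) ?S (?V - {0}) h (w 1)"
    proof (rule homotopic_with_linear [OF h(1) contw])
      fix x assume x: "x \<in> ?S"
      show "closed_segment (h x) (w 1 x) \<subseteq> ?V - {0}"
      proof
        fix y assume "y \<in> closed_segment (h x) (w 1 x)"
        then obtain u where u: "0 \<le> u" "u \<le> 1" and y: "y = (1 - u) *\<^sub>R h x + u *\<^sub>R w 1 x"
          by (auto simp: closed_segment_def)
        have "y = w u x" unfolding y w_def by (simp add: algebra_simps)
        then show "y \<in> ?V - {0}" using wV[OF x] wnz[OF x u] by auto
      qed
    qed
    have conT0: "continuous_on (?V - {0}) (\<lambda>y. inverse(norm y) *\<^sub>R y)"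
      by (intro continuous_intros) auto
    have sub0T: "(\<lambda>y. inverse(norm y) *\<^sub>R y) \<in> (?V - {0}) \<rightarrow> ?S"
      by (auto simp: SS_def subspace_scale[OF subspace_V])
    show "homotopic_with_canon (\<lambda>x. True) ?S ?S h h2"
      using homotopic_with_compose_continuous_left [OF homw conT0 sub0T]
      by (rule homotopic_with_eq) (auto simp: h2_def nh)
  qed
qed

end



lemma refl_props:
  fixes w :: "'a::real_inner"
  defines "R \<equiv> \<lambda>y. y - (2 * (y \<bullet> w) / (w \<bullet> w)) *\<^sub>R w"
  shows "R (R y) = y" "R x \<bullet> R y = x \<bullet> y" "R (- y) = - R y"
proof -
  show "R (- y) = - R y" by (simp add: R_def)
  show "R (R y) = y"
  proof (cases "w \<bullet> w = 0")
    case True then show ?thesis by (simp add: R_def)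
  next
    case False
    have Ryw: "R y \<bullet> w = - (y \<bullet> w)" using False by (simp add: R_def inner_diff_left)
    have "R (R y) = R y - (2 * (R y \<bullet> w) / (w \<bullet> w)) *\<^sub>R w" by (simp only: R_def)
    also have "\<dots> = R y + (2 * (y \<bullet> w) / (w \<bullet> w)) *\<^sub>R w" using Ryw by simp
    also have "\<dots> = y" by (simp add: R_def)
    finally show ?thesis .
  qed
  show "R x \<bullet> R y = x \<bullet> y"
  proof (cases "w \<bullet> w = 0")
    case True then show ?thesis by (simp add: R_def)
  next
    case False
    then show ?thesis by (simp add: R_def inner_diff_left inner_diff_right inner_commute field_simps)
  qed
qed

context benum begin

lemma step_case:
  assumes k: "Suc k < DIM('a)"
    and IH: "\<And>g. continuous_on (SS k) g \<Longrightarrow> g \<in> SS k \<rightarrow> SS k \<Longrightarrow> (\<And>x. x \<in> SS k \<Longrightarrow> g (- x) = - g x)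
               \<Longrightarrow> odd (Brouwer_degree2 k (phi \<circ> g \<circ> psi))"
    and f: "continuous_on (SS (Suc k)) f" "f \<in> SS (Suc k) \<rightarrow> SS (Suc k)"
    and odd: "\<And>x. x \<in> SS (Suc k) \<Longrightarrow> f (- x) = - f x"
  shows "odd (Brouwer_degree2 (Suc k) (phi \<circ> f \<circ> psi))"
proof -
  let ?S = "SS (Suc k)"
  have k': "k < DIM('a)" using k by simp
  obtain h where hdiff: "h differentiable_on ?S" and hS: "h \<in> ?S \<rightarrow> ?S"
    and hodd: "\<And>x. x \<in> ?S \<Longrightarrow> h (- x) = - h x"
    and hom1: "homotopic_with_canon (\<lambda>x. True) ?S ?S f h"
    using approx_odd[OF f odd] by blast
  have hcont: "continuous_on ?S h" using hdiff differentiable_imp_continuous_on by blast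
  have deg1: "Brouwer_degree2 (Suc k) (phi \<circ> f \<circ> psi) = Brouwer_degree2 (Suc k) (phi \<circ> h \<circ> psi)"
    by (rule transfer_homotopic[OF k hom1])
  have "h ` (sphere 0 1 \<inter> V k) \<noteq> sphere 0 1 \<inter> V (Suc k)"
    by (rule spheremap_lemma1[OF subspace_V subspace_V dim_V_less[OF k] V_mono])
       (use differentiable_on_subset[OF hdiff SS_sub] in \<open>auto simp: SS_def\<close>)
  then have "h ` SS k \<noteq> ?S" by (simp add: SS_def)
  moreover have "h ` SS k \<subseteq> ?S" using hS SS_sub by auto
  ultimately obtain p where p: "p \<in> ?S" "p \<notin> h ` SS k" by blast
  have avoid: "h x \<noteq> p \<and> h x \<noteq> - p" if x: "x \<in> SS k" for x
  proof
    show "h x \<noteq> p" using p x by auto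
    show "h x \<noteq> - p"
    proof
      assume "h x = - p"
      then have "h (- x) = p" using hodd[OF subsetD[OF SS_sub x]] by simp
      then show False using p minus_SS[OF x] by (metis image_eqI)
    qed
  qed
  obtain h2 where h2c: "continuous_on ?S h2" and h2S: "h2 \<in> ?S \<rightarrow> ?S"
    and h2odd: "\<And>x. x \<in> ?S \<Longrightarrow> h2 (- x) = - h2 x"
    and hom2: "homotopic_with_canon (\<lambda>x. True) ?S ?S h h2"
    and h2p: "\<And>x. x \<in> SS k \<Longrightarrow> h2 x \<bullet> p = 0"
    using push_equator[OF k hcont hS hodd p(1) avoid] by blast
  have deg2: "Brouwer_degree2 (Suc k) (phi \<circ> h \<circ> psi) = Brouwer_degree2 (Suc k) (phi \<circ> h2 \<circ> psi)"
    by (rule transfer_homotopic[OF k hom2])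
  define e where "e = b (Suc k)"
  define w where "w = p - e"
  define R where "R = (\<lambda>y. y - (2 * (y \<bullet> w) / (w \<bullet> w)) *\<^sub>R w)"
  have RR: "R (R y) = y" for y unfolding R_def by (rule refl_props(1))
  have Rin: "R x \<bullet> R y = x \<bullet> y" for x y unfolding R_def by (rule refl_props(2))
  have Rodd: "R (- y) = - R y" for y unfolding R_def by (rule refl_props(3))
  have Req: "R = (\<lambda>y. y - ((y \<bullet> w) * (2 / (w \<bullet> w))) *\<^sub>R w)" by (auto simp: R_def fun_eq_iff)
  have Rc: "continuous_on A R" for A unfolding Req by (intro continuous_intros)
  have eS: "e \<in> ?S" using bSS[OF k] by (simp add: e_def)
  have pn: "p \<bullet> p = 1" "e \<bullet> e = 1" using p(1) eS by (simp_all add: SS_def dot_square_norm)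
  have Rp: "R p = e"
  proof (cases "w \<bullet> w = 0")
    case True then show ?thesis by (simp add: w_def R_def)
  next
    case False
    have ww: "w \<bullet> w = 2 * (1 - p \<bullet> e)" using pn by (simp add: w_def inner_diff_left inner_diff_right inner_commute)
    have pw: "p \<bullet> w = 1 - p \<bullet> e" using pn by (simp add: w_def inner_diff_right)
    have "2 * (p \<bullet> w) = w \<bullet> w" using ww pw by simp
    then have "2 * (p \<bullet> w) / (w \<bullet> w) = 1" using False by (metis divide_self)
    then have c: "2 * (p \<bullet> w) / (w \<bullet> w) = 1" .
    have "R p = p - (2 * (p \<bullet> w) / (w \<bullet> w)) *\<^sub>R w" by (simp only: R_def)
    then have "R p = p - w" by (simp only: c scaleR_one)
    then show ?thesis by (simp add: w_def)
  qed
  have RV: "R y \<in> V (Suc k)" if "y \<in> V (Suc k)" for y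
  proof -
    have "w \<in> V (Suc k)" using p(1) eS by (auto simp: w_def SS_def intro: subspace_diff[OF subspace_V])
    then show ?thesis unfolding R_def using that by (intro subspace_diff[OF subspace_V] subspace_scale[OF subspace_V])
  qed
  have Rnorm: "norm (R y) = norm y" for y using Rin[of y y] by (simp add: dot_square_norm)
  have RS: "R \<in> ?S \<rightarrow> ?S" using RV Rnorm by (auto simp: SS_def)
  define h3 where "h3 = R \<circ> h2"
  have h3c: "continuous_on ?S h3" unfolding h3_def by (rule continuous_on_compose[OF h2c Rc])
  have h3S: "h3 \<in> ?S \<rightarrow> ?S" using h2S RS by (auto simp: h3_def)
  have h3odd: "h3 (- x) = - h3 x" if "x \<in> ?S" for x using h2odd[OF that] Rodd by (simp add: h3_def)
  have h3k: "h3 x \<in> SS k" if x: "x \<in> SS k" for x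
  proof -
    have xS: "x \<in> ?S" using x SS_sub by auto
    have "h3 x \<bullet> e = 0" using Rin[of "h2 x" p] Rp h2p[OF x] by (simp add: h3_def)
    then show ?thesis using SS_Suc_eq[OF k] h3S xS by (auto simp: e_def)
  qed
  let ?F = "phi \<circ> h3 \<circ> psi"
  have cmF: "continuous_map (nsphere (Suc k)) (nsphere (Suc k)) ?F"
    by (rule transfer_cont[OF k h3c h3S])
  have "even (Brouwer_degree2 (Suc k) ?F - Brouwer_degree2 (Suc k - Suc 0) ?F)"
  proof (rule Borsuk_odd_mapping_degree_step[OF cmF])
    fix u assume "u \<in> topspace (nsphere (Suc k))"
    then have u: "psi u \<in> ?S" using psi_NS[OF k] by (simp add: topspace_nsphere_eq)
    show "(?F \<circ> (\<lambda>x i. - x i)) u = ((\<lambda>x i. - x i) \<circ> ?F) u"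
      using h3odd[OF u] by (simp add: psi_minus phi_minus)
  next
    show "?F \<in> topspace (nsphere (Suc k - Suc 0)) \<rightarrow> topspace (nsphere (Suc k - Suc 0))"
      using psi_NS[OF k'] phi_SS[OF k'] h3k by (auto simp: topspace_nsphere_eq)
  qed
  moreover have "odd (Brouwer_degree2 k ?F)"
  proof (rule IH)
    show "continuous_on (SS k) h3" by (rule continuous_on_subset[OF h3c SS_sub])
    show "h3 \<in> SS k \<rightarrow> SS k" using h3k by auto
    show "h3 (- x) = - h3 x" if "x \<in> SS k" for x using h3odd subsetD[OF SS_sub that] by blast
  qed
  ultimately have oddF: "odd (Brouwer_degree2 (Suc k) ?F)" by simp
  let ?FR = "phi \<circ> R \<circ> psi" and ?F2 = "phi \<circ> h2 \<circ> psi"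
  have cmR: "continuous_map (nsphere (Suc k)) (nsphere (Suc k)) ?FR"
    by (rule transfer_cont[OF k Rc RS])
  have cm2: "continuous_map (nsphere (Suc k)) (nsphere (Suc k)) ?F2"
    by (rule transfer_cont[OF k h2c h2S])
  have "Brouwer_degree2 (Suc k) ?F = Brouwer_degree2 (Suc k) (?FR \<circ> ?F2)"
    by (rule Brouwer_degree2_eq) (simp add: h3_def)
  also have "\<dots> = Brouwer_degree2 (Suc k) ?FR * Brouwer_degree2 (Suc k) ?F2"
    by (rule Brouwer_degree2_compose[OF cm2 cmR])
  finally have eqF: "Brouwer_degree2 (Suc k) ?F = Brouwer_degree2 (Suc k) ?FR * Brouwer_degree2 (Suc k) ?F2" .
  then have "odd (Brouwer_degree2 (Suc k) ?F2)" using oddF eqF by simp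
  then show ?thesis using deg1 deg2 by simp
qed

lemma odd_degree:
  "k < DIM('a) \<Longrightarrow> continuous_on (SS k) f \<Longrightarrow> f \<in> SS k \<rightarrow> SS k \<Longrightarrow> (\<And>x. x \<in> SS k \<Longrightarrow> f (- x) = - f x)
    \<Longrightarrow> odd (Brouwer_degree2 k (phi \<circ> f \<circ> psi))"
proof (induction k arbitrary: f)
  case 0 then show ?case by (intro base_case) auto
next
  case (Suc k)
  show ?case by (rule step_case[OF Suc.prems(1) Suc.IH]) (use Suc.prems in auto)
qed

end



context benum begin

lemma borsuk_ulam:
  assumes k: "Suc k < DIM('a)"
    and q: "continuous_on (SS (Suc k)) q" "q \<in> SS (Suc k) \<rightarrow> SS k"
    and odd: "\<And>x. x \<in> SS (Suc k) \<Longrightarrow> q (- x) = - q x"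
  shows False
proof -
  have qS: "q \<in> SS (Suc k) \<rightarrow> SS (Suc k)" using q(2) SS_sub by auto
  have "odd (Brouwer_degree2 (Suc k) (phi \<circ> q \<circ> psi))"
    by (rule odd_degree[OF k q(1) qS odd])
  moreover have "Brouwer_degree2 (Suc k) (phi \<circ> q \<circ> psi) = 0"
  proof (rule Brouwer_degree2_nonsurjective[OF transfer_cont[OF k q(1) qS]])
    have bk: "phi (b (Suc k)) \<in> NS (Suc k)" using phi_SS[OF k] bSS[OF k] by simp
    have "phi (b (Suc k)) \<notin> (phi \<circ> q \<circ> psi) ` NS (Suc k)"
    proof
      assume "phi (b (Suc k)) \<in> (phi \<circ> q \<circ> psi) ` NS (Suc k)"
      then obtain y where y: "y \<in> NS (Suc k)" and eq: "phi (b (Suc k)) = phi (q (psi y))" by auto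
      have "q (psi y) \<in> SS k" using q(2) psi_NS[OF k y] by auto
      then have "q (psi y) \<bullet> b (Suc k) = 0" using k by (auto simp: SS_def V_def)
      moreover have "phi (b (Suc k)) (Suc k) = 1" using k by (simp add: phi_def b_inner)
      moreover have "phi (b (Suc k)) (Suc k) = phi (q (psi y)) (Suc k)" using eq by simp
      ultimately show False using k by (simp add: phi_def)
    qed
    then show "(phi \<circ> q \<circ> psi) ` topspace (nsphere (Suc k)) \<noteq> topspace (nsphere (Suc k))"
      using bk by (auto simp: topspace_nsphere_eq)
  qed
  ultimately show False by simp
qed

end

theorem proposition2:
  fixes I :: "'i set" and U :: "'i \<Rightarrow> 'a::euclidean_space set"
    and d n m :: nat and e :: 'a
  assumes "DIM('a) = d + 1" and "1 \<le> d" and "1 \<le> n" and "n < m"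
    and "e \<in> Basis"
    and "open_sphere_family I U"
    and "antipodal_family I U"
    and "nm_fold_cover n m e I U"
  shows "d + 2 * n \<le> card I"
proof (rule ccontr)
  assume con: "\<not> d + 2 * n \<le> card I"
  let ?S = "sphere (0::'a) 1"
  have finI: "finite I" and opn: "\<And>i. i \<in> I \<Longrightarrow> openin (top_of_set ?S) (U i)"
    using assms(6) by (auto simp: open_sphere_family_def)
  have anti: "\<And>i x. i \<in> I \<Longrightarrow> x \<in> U i \<Longrightarrow> - x \<notin> U i"
    using assms(7) by (auto simp: antipodal_family_def)
  have cov: "\<And>x. x \<in> ?S \<Longrightarrow> n \<le> card {i\<in>I. x \<in> U i}"
    using assms(8) by (auto simp: nm_fold_cover_def)
  have Usub: "U i \<subseteq> ?S" if "i \<in> I" for i using openin_subset[OF opn[OF that]] by simp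
  have clC: "closed (?S - U i)" if "i \<in> I" for i
  proof -
    have "closedin (top_of_set ?S) (?S - U i)"
      using opn[OF that] by (simp add: openin_closedin_eq)
    then show ?thesis using closedin_closed_trans closed_sphere by blast
  qed
  have count: "2 * n \<le> card (I - J)"
    if J: "J \<subseteq> I" and x: "x \<in> ?S" and none: "\<And>i. i \<in> J \<Longrightarrow> x \<notin> U i \<and> - x \<notin> U i" for J x
  proof -
    let ?A = "{i\<in>I. x \<in> U i}" and ?B = "{i\<in>I. - x \<in> U i}"
    have mx: "- x \<in> ?S" using x by simp
    have "?A \<inter> ?B = {}" using anti by auto
    moreover have "?A \<union> ?B \<subseteq> I - J" using none by auto
    moreover have "n \<le> card ?A" "n \<le> card ?B" using cov[OF x] cov[OF mx] by auto
    ultimately have "card (?A \<union> ?B) = card ?A + card ?B" "card (?A \<union> ?B) \<le> card (I - J)"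
      "n \<le> card ?A" "n \<le> card ?B"
    proof -
      show "card (?A \<union> ?B) = card ?A + card ?B"
        by (rule card_Un_disjoint) (use finI \<open>?A \<inter> ?B = {}\<close> in auto)
      show "card (?A \<union> ?B) \<le> card (I - J)"
        by (rule card_mono) (use finI \<open>?A \<union> ?B \<subseteq> I - J\<close> in auto)
    qed (use \<open>n \<le> card ?A\<close> \<open>n \<le> card ?B\<close> in simp_all)
    then show ?thesis by linarith
  qed
  obtain x0 where x0: "x0 \<in> ?S" using assms(5) by (metis mem_sphere_0 norm_Basis)
  have "2 * n \<le> card I" using count[of "{}" x0] x0 by simp
  define j where "j = card I + 1 - 2 * n"
  have j1: "1 \<le> j" and jd: "j \<le> d" using \<open>2 * n \<le> card I\<close> con by (auto simp: j_def)
  obtain \<iota> where iota: "bij_betw \<iota> {0..<card I} I" using ex_bij_betw_nat_finite[OF finI] by blast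
  obtain b :: "nat \<Rightarrow> 'a" where bb: "bij_betw b {..<DIM('a)} Basis"
    using ex_bij_betw_nat_finite[of "Basis :: 'a set"] by (auto simp: atLeast0LessThan)
  interpret benum b by (unfold_locales) (rule bb)
  define f where "f i x = infdist x (?S - U i)" for i x
  define g where "g i x = f i x - f i (- x)" for i x
  have gpos: "g i x \<noteq> 0" if i: "i \<in> I" and x: "x \<in> ?S" and xu: "x \<in> U i \<or> - x \<in> U i" for i x
  proof -
    have mx: "- x \<in> ?S" using x by simp
    have ne: "?S - U i \<noteq> {}"
    proof (cases "x \<in> U i")
      case True then have "- x \<in> ?S - U i" using anti[OF i] mx by blast
      then show ?thesis by blast
    next
      case False then have "x \<in> ?S - U i" using x by blast
      then show ?thesis by blast
    qed
    show ?thesis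
    proof (cases "x \<in> U i")
      case True
      then have "- x \<in> ?S - U i" using anti[OF i] mx by auto
      then have "f i (- x) = 0" using in_closed_iff_infdist_zero[OF clC[OF i] ne] by (simp add: f_def)
      moreover have "x \<notin> ?S - U i" using True by blast
      then have "f i x \<noteq> 0" unfolding f_def using in_closed_iff_infdist_zero[OF clC[OF i] ne, of x] by blast
      ultimately show ?thesis by (simp add: g_def)
    next
      case False
      then have "- x \<in> U i" using xu by simp
      have "x \<in> ?S - U i" using False x by auto
      then have "f i x = 0" using in_closed_iff_infdist_zero[OF clC[OF i] ne] by (simp add: f_def)
      moreover have "- x \<notin> ?S - U i" using \<open>- x \<in> U i\<close> by blast
      then have "f i (- x) \<noteq> 0" unfolding f_def using in_closed_iff_infdist_zero[OF clC[OF i] ne, of "- x"] by blast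
      ultimately show ?thesis by (simp add: g_def)
    qed
  qed
  define q where "q x = (\<Sum>t<j. g (\<iota> t) x *\<^sub>R b t)" for x
  have gm: "g i (- x) = - g i x" for i x by (simp add: g_def)
  have qodd: "q (- x) = - q x" for x unfolding q_def gm by (simp add: sum_negf)
  have qinner: "q x \<bullet> b s = g (\<iota> s) x" if "s < j" for s x
  proof -
    have "q x \<bullet> b s = (\<Sum>t<j. g (\<iota> t) x * (b t \<bullet> b s))" by (simp add: q_def inner_sum_left)
    also have "\<dots> = (\<Sum>t<j. if t = s then g (\<iota> s) x else 0)"
      by (rule sum.cong) (use that jd assms(1) in \<open>auto simp: b_inner\<close>)
    also have "\<dots> = g (\<iota> s) x" using that by simp
    finally show ?thesis .
  qed
  have qV: "q x \<in> V (d - 1)" for x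
  proof -
    have "b t \<in> V (d - 1)" if "t < j" for t using that jd assms(1) by (simp add: b_in_V)
    then show ?thesis unfolding q_def by (intro subspace_sum[OF subspace_V] subspace_scale[OF subspace_V]) auto
  qed
  have qcont: "continuous_on ?S q"
    unfolding q_def g_def f_def
    by (intro continuous_on_sum continuous_on_scaleR continuous_on_diff continuous_on_infdist continuous_on_id continuous_on_minus continuous_on_const)
  show False
  proof (cases "\<exists>x\<in>?S. q x = 0")
    case True
    then obtain x where x: "x \<in> ?S" and q0: "q x = 0" by blast
    let ?J = "\<iota> ` {..<j}"
    have jI: "{..<j} \<subseteq> {0..<card I}" using assms(3) by (auto simp: j_def)
    have JI: "?J \<subseteq> I" using iota jI by (auto simp: bij_betw_def)
    have none: "x \<notin> U i \<and> - x \<notin> U i" if "i \<in> ?J" for i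
    proof -
      obtain s where s: "s < j" and i: "i = \<iota> s" using \<open>i \<in> ?J\<close> by auto
      have "g i x = 0" using qinner[OF s, of x] q0 i by simp
      then show ?thesis using gpos[of i x] JI that x by blast
    qed
    have "card ?J = j"
    proof -
      have "inj_on \<iota> {..<j}" using iota jI
        by (auto simp: bij_betw_def intro: inj_on_subset)
      then show ?thesis by (simp add: card_image)
    qed
    then have "card (I - ?J) = card I - j" using JI finI by (simp add: card_Diff_subset finite_subset)
    moreover have "card I - j < 2 * n" unfolding j_def using \<open>2 * n \<le> card I\<close> assms(3) by presburger
    ultimately show False using count[OF JI x none] by linarith
  next
    case False
    define Q where "Q x = inverse (norm (q x)) *\<^sub>R q x" for x
    have Sd: "SS d = ?S" using assms(1) by (simp add: SS_def V_top)
    have dd: "Suc (d - 1) = d" using assms(2) by simp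
    show False
    proof (rule borsuk_ulam[of "d - 1" Q])
      show "Suc (d - 1) < DIM('a)" using assms(1,2) by simp
      show "continuous_on (SS (Suc (d - 1))) Q"
        unfolding dd Sd Q_def using False by (intro continuous_intros qcont) auto
      show "Q \<in> SS (Suc (d - 1)) \<rightarrow> SS (d - 1)"
        unfolding dd Sd using False qV by (auto simp: Q_def SS_def subspace_scale[OF subspace_V])
      show "Q (- x) = - Q x" if "x \<in> SS (Suc (d - 1))" for x by (simp add: Q_def qodd)
    qed
  qed
qed


end
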